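(* Let $l\ge2$ be odd and let $a,b\in\{1,\dots,l-1\}$ be such that $X=X(\mathbb{Z}_{2l},\{\pm a,\pm b\})$ is a connected $4$-regular circulant graph with $a+b\ne l$. Then $X$ does not admit perfect state transfer between (distinct) vertex type states.
   Context: $X(\mathbb{Z}_n,S)$ (with $S\subseteq\mathbb{Z}_n\setminus\{0\}$, $S=-S$) has vertex set $\mathbb{Z}_n$ and edges $\{x,y\}$ with $y-x\in S$. For a graph with symmetric arc set $\mathcal{A}$ ($t((x,y))=y$, $(x,y)^{-1}=(y,x)$): boundary matrix $d_{x,a}=\frac{1}{\sqrt{\deg x}}\delta_{x,t(a)}$, shift matrix $R_{a,b}=\delta_{a,b^{-1}}$, $U=R(2d^*d-I_{\mathcal{A}})$. Perfect state transfer between vertex type states means $U^\tau d^*e_x=\gamma d^*e_y$ for some distinct vertices $x,y$, some $\tau\in\mathbb{Z}_{\ge1}$ and some $|\gamma|=1$ ($e_x$ the standard unit vector). *)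

theory Defs
  imports Complex_Main
begin

text \<open>Matrices indexed by finite sets are represented as functions of two indices.\<close>

definition arcs :: "'v set \<Rightarrow> ('v \<Rightarrow> 'v \<Rightarrow> bool) \<Rightarrow> ('v \<times> 'v) set" where
  "arcs V E = {(x, y). x \<in> V \<and> y \<in> V \<and> E x y}"

definition gdeg :: "'v set \<Rightarrow> ('v \<Rightarrow> 'v \<Rightarrow> bool) \<Rightarrow> 'v \<Rightarrow> nat" where
  "gdeg V E x = card {y \<in> V. E x y}"

definition term_arc :: "'v \<times> 'v \<Rightarrow> 'v" where
  "term_arc a = snd a"

definition inv_arc :: "'v \<times> 'v \<Rightarrow> 'v \<times> 'v" where
  "inv_arc a = (snd a, fst a)"

definition bdry :: "'v set \<Rightarrow> ('v \<Rightarrow> 'v \<Rightarrow> bool) \<Rightarrow> 'v \<Rightarrow> 'v \<times> 'v \<Rightarrow> complex" where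
  "bdry V E x a = (if x = term_arc a then complex_of_real (1 / sqrt (real (gdeg V E x))) else 0)"

definition shift :: "'v \<times> 'v \<Rightarrow> 'v \<times> 'v \<Rightarrow> complex" where
  "shift a b = (if a = inv_arc b then 1 else 0)"

definition dstar_d :: "'v set \<Rightarrow> ('v \<Rightarrow> 'v \<Rightarrow> bool) \<Rightarrow> 'v \<times> 'v \<Rightarrow> 'v \<times> 'v \<Rightarrow> complex" where
  "dstar_d V E a b = (\<Sum>x\<in>V. cnj (bdry V E x a) * bdry V E x b)"

definition walkU :: "'v set \<Rightarrow> ('v \<Rightarrow> 'v \<Rightarrow> bool) \<Rightarrow> 'v \<times> 'v \<Rightarrow> 'v \<times> 'v \<Rightarrow> complex" where
  "walkU V E a b = (\<Sum>c\<in>arcs V E. shift a c *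
       (2 * dstar_d V E c b - (if c = b then 1 else 0)))"

definition arc_mult :: "'v set \<Rightarrow> ('v \<Rightarrow> 'v \<Rightarrow> bool) \<Rightarrow> (('v \<times> 'v) \<Rightarrow> complex) \<Rightarrow> (('v \<times> 'v) \<Rightarrow> complex)" where
  "arc_mult V E \<psi> = (\<lambda>a. \<Sum>b\<in>arcs V E. walkU V E a b * \<psi> b)"

definition walkU_pow :: "'v set \<Rightarrow> ('v \<Rightarrow> 'v \<Rightarrow> bool) \<Rightarrow> nat \<Rightarrow> (('v \<times> 'v) \<Rightarrow> complex) \<Rightarrow> (('v \<times> 'v) \<Rightarrow> complex)" where
  "walkU_pow V E \<tau> = (arc_mult V E ^^ \<tau>)"

definition vstate :: "'v set \<Rightarrow> ('v \<Rightarrow> 'v \<Rightarrow> bool) \<Rightarrow> 'v \<Rightarrow> ('v \<times> 'v) \<Rightarrow> complex" where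
  "vstate V E x = (\<lambda>a. cnj (bdry V E x a))"

definition vertex_PST :: "'v set \<Rightarrow> ('v \<Rightarrow> 'v \<Rightarrow> bool) \<Rightarrow> bool" where
  "vertex_PST V E \<longleftrightarrow> (\<exists>x\<in>V. \<exists>y\<in>V. \<exists>\<tau>::nat. \<exists>\<gamma>::complex.
      x \<noteq> y \<and> \<tau> \<ge> 1 \<and> cmod \<gamma> = 1 \<and>
      (\<forall>a\<in>arcs V E. walkU_pow V E \<tau> (vstate V E x) a = \<gamma> * vstate V E y a))"

definition gconnected :: "'v set \<Rightarrow> ('v \<Rightarrow> 'v \<Rightarrow> bool) \<Rightarrow> bool" where
  "gconnected V E \<longleftrightarrow> (\<forall>x\<in>V. \<forall>y\<in>V. (x, y) \<in> (arcs V E)\<^sup>*)"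

definition gregular :: "'v set \<Rightarrow> ('v \<Rightarrow> 'v \<Rightarrow> bool) \<Rightarrow> nat \<Rightarrow> bool" where
  "gregular V E k \<longleftrightarrow> (\<forall>x\<in>V. gdeg V E x = k)"

text \<open>Circulant graph X(Z_n, S): vertices 0..n-1 (representatives of Z_n),
x ~ y iff (y - x) mod n \<in> S, S given by residues in {0..n-1}.\<close>
definition circ_V :: "int \<Rightarrow> int set" where
  "circ_V n = {0..<n}"

definition circ_E :: "int \<Rightarrow> int set \<Rightarrow> int \<Rightarrow> int \<Rightarrow> bool" where
  "circ_E n S x y \<longleftrightarrow> (y - x) mod n \<in> S"

definition pm_set :: "int \<Rightarrow> int \<Rightarrow> int \<Rightarrow> int set" where
  "pm_set n a b = {a mod n, (- a) mod n, b mod n, (- b) mod n}"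

end

theory Submission
  imports Defs "HOL-Library.Z2" "HOL-Number_Theory.Number_Theory"
begin


locale reg4 =
  fixes V :: "'v set" and E :: "'v \<Rightarrow> 'v \<Rightarrow> bool"
  assumes fin: "finite V" and sym: "\<And>x y. E x y \<Longrightarrow> E y x"
    and reg: "\<And>x. x \<in> V \<Longrightarrow> gdeg V E x = 4"
begin

definition Nb :: "'v \<Rightarrow> 'v set" where "Nb v = {u\<in>V. E v u}"

lemma fin_Nb: "finite (Nb v)" using fin by (simp add: Nb_def)
lemma card_Nb: "v \<in> V \<Longrightarrow> card (Nb v) = 4" using reg[of v] by (simp add: gdeg_def Nb_def)

lemma bdry_V: "x \<in> V \<Longrightarrow> bdry V E x a = (if x = snd a then 1/2 else 0)"
proof -
  assume x: "x \<in> V"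
  have s4: "sqrt 4 = (2::real)" using real_sqrt_abs[of 2] by (simp add: power2_eq_square)
  show ?thesis using reg[OF x] x s4 by (auto simp: bdry_def term_arc_def)
qed

lemma dd: "c \<in> arcs V E \<Longrightarrow> dstar_d V E c b = (if snd c = snd b then 1/4 else 0)"
proof -
  assume c: "c \<in> arcs V E"
  hence sc: "snd c \<in> V" by (auto simp: arcs_def)
  have "dstar_d V E c b = (\<Sum>x\<in>V. if x = snd c then (if snd c = snd b then 1/4 else 0) else 0)"
    unfolding dstar_d_def by (rule sum.cong) (auto simp: bdry_V)
  also have "\<dots> = (if snd c = snd b then 1/4 else 0)" using sc fin by simp
  finally show ?thesis .
qed

lemma finarcs: "finite (arcs V E)"
proof -
  have "arcs V E \<subseteq> V \<times> V" by (auto simp: arcs_def)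
  thus ?thesis using fin finite_subset by blast
qed

lemma inv_arcs: "a \<in> arcs V E \<Longrightarrow> inv_arc a \<in> arcs V E"
  by (auto simp: arcs_def inv_arc_def sym)

lemma walkU_arc: "a \<in> arcs V E \<Longrightarrow> walkU V E a b =
   (if fst a = snd b then 1/2 else 0) - (if b = inv_arc a then 1 else 0)"
proof -
  assume a: "a \<in> arcs V E"
  have "walkU V E a b = (\<Sum>c\<in>arcs V E. if c = inv_arc a then
     2 * dstar_d V E (inv_arc a) b - (if inv_arc a = b then 1 else 0) else 0)"
    unfolding walkU_def by (rule sum.cong) (auto simp: shift_def inv_arc_def)
  also have "\<dots> = 2 * dstar_d V E (inv_arc a) b - (if inv_arc a = b then 1 else 0)"
    using inv_arcs[OF a] finarcs by (simp only: sum.delta) simp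
  finally show ?thesis using dd[OF inv_arcs[OF a]] by (auto simp: inv_arc_def)
qed

lemma sum_in: "v \<in> V \<Longrightarrow> (\<Sum>b\<in>{b\<in>arcs V E. snd b = v}. g b) = (\<Sum>u\<in>Nb v. g (u, v))"
proof -
  assume v: "v \<in> V"
  have "{b\<in>arcs V E. snd b = v} = (\<lambda>u. (u, v)) ` Nb v"
    using v by (auto simp: arcs_def Nb_def sym)
  moreover have "inj_on (\<lambda>u. (u, v)) (Nb v)" by (auto simp: inj_on_def)
  ultimately show ?thesis by (simp add: sum.reindex)
qed

definition Fs :: "('v \<times> 'v \<Rightarrow> complex) \<Rightarrow> 'v \<Rightarrow> complex" where
  "Fs \<psi> v = (\<Sum>u\<in>Nb v. \<psi> (u, v))"
definition Gs :: "('v \<times> 'v \<Rightarrow> complex) \<Rightarrow> 'v \<Rightarrow> complex" where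
  "Gs \<psi> v = (\<Sum>u\<in>Nb v. \<psi> (v, u))"
definition Aadj :: "('v \<Rightarrow> 'b::comm_monoid_add) \<Rightarrow> 'v \<Rightarrow> 'b" where
  "Aadj h v = (\<Sum>u\<in>Nb v. h u)"


lemma arc_mult_arc: "(p, q) \<in> arcs V E \<Longrightarrow> arc_mult V E \<psi> (p, q) = Fs \<psi> p / 2 - \<psi> (q, p)"
proof -
  assume a: "(p, q) \<in> arcs V E"
  hence pV: "p \<in> V" by (auto simp: arcs_def)
  have "arc_mult V E \<psi> (p, q) = (\<Sum>b\<in>arcs V E. (if snd b = p then \<psi> b / 2 else 0))
      - (\<Sum>b\<in>arcs V E. if b = (q, p) then \<psi> b else 0)"
    unfolding arc_mult_def sum_subtractf[symmetric]
    by (rule sum.cong) (auto simp: walkU_arc[OF a] inv_arc_def)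
  also have "(\<Sum>b\<in>arcs V E. (if snd b = p then \<psi> b / 2 else 0)) = (\<Sum>b\<in>{b\<in>arcs V E. snd b = p}. \<psi> b / 2)"
    using finarcs by (simp add: sum.inter_filter)
  also have "\<dots> = Fs \<psi> p / 2" using sum_in[OF pV, of "\<lambda>b. \<psi> b / 2"]
    by (simp add: Fs_def sum_divide_distrib)
  also have "(\<Sum>b\<in>arcs V E. if b = (q, p) then \<psi> b else 0) = \<psi> (q, p)"
    using inv_arcs[OF a] finarcs by (simp add: inv_arc_def)
  finally show ?thesis .
qed

lemma Nb_arc: "v \<in> V \<Longrightarrow> u \<in> Nb v \<Longrightarrow> (u, v) \<in> arcs V E \<and> (v, u) \<in> arcs V E"
  by (auto simp: Nb_def arcs_def sym)

lemma Fs_step: "v \<in> V \<Longrightarrow> Fs (arc_mult V E \<psi>) v = Aadj (Fs \<psi>) v / 2 - Gs \<psi> v"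
proof -
  assume v: "v \<in> V"
  have "Fs (arc_mult V E \<psi>) v = (\<Sum>u\<in>Nb v. Fs \<psi> u / 2 - \<psi> (v, u))"
    unfolding Fs_def by (rule sum.cong) (auto simp: arc_mult_arc[unfolded Fs_def] Nb_arc[OF v])
  thus ?thesis by (simp add: sum_subtractf sum_divide_distrib Aadj_def Gs_def)
qed

lemma Gs_step: "v \<in> V \<Longrightarrow> Gs (arc_mult V E \<psi>) v = Fs \<psi> v"
proof -
  assume v: "v \<in> V"
  have "Gs (arc_mult V E \<psi>) v = (\<Sum>u\<in>Nb v. Fs \<psi> v / 2 - \<psi> (u, v))"
    unfolding Gs_def by (rule sum.cong) (auto simp: arc_mult_arc[unfolded Fs_def] Nb_arc[OF v] Fs_def)
  also have "\<dots> = 4 * (Fs \<psi> v / 2) - Fs \<psi> v"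
    by (simp add: sum_subtractf card_Nb[OF v] Fs_def)
  finally show ?thesis by simp
qed


fun K :: "'v \<Rightarrow> nat \<Rightarrow> 'v \<Rightarrow> int" where
  "K x 0 v = (if v = x then 2 else 0)"
| "K x (Suc 0) v = (if x \<in> Nb v then 1 else 0)"
| "K x (Suc (Suc t)) v = Aadj (K x (Suc t)) v - 4 * K x t v"

lemma Aadj_cong: "v \<in> V \<Longrightarrow> (\<And>u. u \<in> V \<Longrightarrow> h u = h' u) \<Longrightarrow> Aadj h v = Aadj h' v"
  unfolding Aadj_def by (rule sum.cong) (auto simp: Nb_def)

lemma FK: assumes x: "x \<in> V"
  shows "\<forall>v\<in>V. Fs ((arc_mult V E ^^ t) (vstate V E x)) v = of_int (K x t v) / 2^t
     \<and> Fs ((arc_mult V E ^^ Suc t) (vstate V E x)) v = of_int (K x (Suc t) v) / 2^(Suc t)"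
proof (induction t)
  case 0
  have f0: "Fs (vstate V E x) v = of_int (K x 0 v)" if v: "v \<in> V" for v
  proof -
    have "Fs (vstate V E x) v = (\<Sum>u\<in>Nb v. (if x = v then 1/2 else 0))"
      unfolding Fs_def vstate_def by (rule sum.cong) (auto simp: bdry_V[OF x])
    also have "\<dots> = of_int (K x 0 v)" using card_Nb[OF v] by auto
    finally show ?thesis .
  qed
  have g0: "Gs (vstate V E x) v = (if x \<in> Nb v then 1/2 else 0)" if v: "v \<in> V" for v
  proof -
    have "Gs (vstate V E x) v = (\<Sum>u\<in>Nb v. (if u = x then 1/2 else 0))"
      unfolding Gs_def vstate_def by (rule sum.cong) (auto simp: bdry_V[OF x])
    also have "\<dots> = (if x \<in> Nb v then 1/2 else 0)" using fin_Nb by (simp add: sum.delta')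
    finally show ?thesis .
  qed
  have a0: "Aadj (Fs (vstate V E x)) v = (if x \<in> Nb v then 2 else 0)" if v: "v \<in> V" for v
  proof -
    have "Aadj (Fs (vstate V E x)) v = Aadj (\<lambda>u. of_int (K x 0 u)) v"
      by (rule Aadj_cong[OF v]) (simp add: f0)
    also have "\<dots> = (\<Sum>u\<in>Nb v. (if u = x then 2 else 0))" unfolding Aadj_def by (rule sum.cong) auto
    also have "\<dots> = (if x \<in> Nb v then 2 else 0)" using fin_Nb by (simp add: sum.delta')
    finally show ?thesis .
  qed
  show ?case using f0 g0 a0 by (auto simp: Fs_step)
next
  case (Suc t)
  have "Fs ((arc_mult V E ^^ Suc (Suc t)) (vstate V E x)) v = of_int (K x (Suc (Suc t)) v) / 2^(Suc (Suc t))"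
    if v: "v \<in> V" for v
  proof -
    let ?p = "(arc_mult V E ^^ Suc t) (vstate V E x)"
    let ?q = "(arc_mult V E ^^ t) (vstate V E x)"
    have "Fs ((arc_mult V E ^^ Suc (Suc t)) (vstate V E x)) v = Aadj (Fs ?p) v / 2 - Fs ?q v"
      using v by (simp add: Fs_step Gs_step)
    also have "Aadj (Fs ?p) v = Aadj (\<lambda>u. of_int (K x (Suc t) u) / 2^(Suc t)) v"
      by (rule Aadj_cong[OF v]) (use Suc in auto)
    also have "\<dots> = of_int (Aadj (K x (Suc t)) v) / 2^(Suc t)"
      by (simp add: Aadj_def sum_divide_distrib)
    also have "Fs ?q v = of_int (K x t v) / 2^t" using Suc v by auto
    finally show ?thesis by (simp add: field_simps)
  qed
  thus ?case using Suc by auto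
qed

lemma PST_even:
  assumes x: "x \<in> V" and y: "y \<in> V"
    and h: "\<forall>a\<in>arcs V E. walkU_pow V E \<tau> (vstate V E x) a = \<gamma> * vstate V E y a"
    and g: "cmod \<gamma> = 1" and v: "v \<in> V"
  shows "even (K x \<tau> v)"
proof -
  have "Fs ((arc_mult V E ^^ \<tau>) (vstate V E x)) v = (\<Sum>u\<in>Nb v. \<gamma> * (if y = v then 1/2 else 0))"
    unfolding Fs_def by (rule sum.cong) (use h Nb_arc[OF v] in \<open>auto simp: walkU_pow_def vstate_def bdry_V[OF y]\<close>)
  also have "\<dots> = \<gamma> * (if y = v then 2 else 0)" using card_Nb[OF v] by auto
  moreover have "Fs ((arc_mult V E ^^ \<tau>) (vstate V E x)) v = of_int (K x \<tau> v) / 2^\<tau>"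
    using FK[OF x] v by auto
  ultimately have e0: "of_int (K x \<tau> v) / 2^\<tau> = \<gamma> * (if y = v then 2 else 0)"
    by simp
  have e: "of_int (K x \<tau> v) = 2^\<tau> * (\<gamma> * (if y = v then 2 else 0))"
    unfolding e0[symmetric] by simp
  show ?thesis
  proof (cases "y = v")
    case False thus ?thesis using e by simp
  next
    case True
    hence "cmod (of_int (K x \<tau> v)) = 2^(Suc \<tau>)" using e g by (simp add: norm_mult norm_power)
    hence "real_of_int \<bar>K x \<tau> v\<bar> = 2^(Suc \<tau>)" by simp
    hence "\<bar>K x \<tau> v\<bar> = 2^(Suc \<tau>)" by (metis of_int_eq_iff of_int_numeral of_int_power)
    hence "even \<bar>K x \<tau> v\<bar>" by simp
    thus ?thesis by simp
  qed
qed

definition Bt :: "'v \<Rightarrow> nat \<Rightarrow> 'v \<Rightarrow> bit" where "Bt x t v = of_int (K x t v)"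

lemma Bt_step: "v \<in> V \<Longrightarrow> Bt x (Suc (Suc t)) v = Aadj (Bt x (Suc t)) v"
proof -
  have four: "(4::bit) = 0" 
  proof -
    have "(4::bit) = 2 * 2" by simp
    thus ?thesis by simp
  qed
  show ?thesis by (simp add: Bt_def Aadj_def four)
qed

lemma Bt_one: "Bt x (Suc 0) v = (if x \<in> Nb v then 1 else 0)" by (simp add: Bt_def)

lemma Bt_even: "even (K x t v) \<Longrightarrow> Bt x t v = 0"
  by (auto simp: Bt_def)

end


lemma bit_add_self: "(x::bit) + x = 0"
  by (metis bit_2_eq_0 mult_2 mult_zero_left)
lemma bit_add_self2: "(x::bit) + (x + y) = y"
  by (metis add.assoc add_0 bit_add_self)

definition Aop :: "int \<Rightarrow> int \<Rightarrow> (int \<Rightarrow> bit) \<Rightarrow> int \<Rightarrow> bit" where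
  "Aop a b h z = h (z + a) + h (z - a) + h (z + b) + h (z - b)"

lemma Aop_frob: "(Aop a b ^^ (2^k)) h z =
   h (z + 2^k * a) + h (z - 2^k * a) + h (z + 2^k * b) + h (z - 2^k * b)"
proof (induction k arbitrary: h z)
  case 0 thus ?case by (simp add: Aop_def)
next
  case (Suc k)
  have "(Aop a b ^^ (2^Suc k)) h = (Aop a b ^^ (2^k)) ((Aop a b ^^ (2^k)) h)"
    by (simp only: power_Suc mult_2 funpow_add comp_def)
  hence "(Aop a b ^^ (2^Suc k)) h z = (Aop a b ^^ (2^k)) ((Aop a b ^^ (2^k)) h) z" by simp
  also have "\<dots> = h (z + 2^Suc k * a) + h (z - 2^Suc k * a) + h (z + 2^Suc k * b) + h (z - 2^Suc k * b)"
  proof -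
    define M :: int where "M = 2^k"
    have M2: "2^Suc k = M + M" by (simp add: M_def)
    have r: "z + M*b + M*a = z + M*a + M*b" "z + M*b - M*a = z - M*a + M*b"
      "z - M*b + M*a = z + M*a - M*b" "z - M*b - M*a = z - M*a - M*b"
      "z + M*a - M*a = z" "z - M*a + M*a = z" "z + M*b - M*b = z" "z - M*b + M*b = z"
      "z + M*a + M*a = z + (M+M)*a" "z - M*a - M*a = z - (M+M)*a"
      "z + M*b + M*b = z + (M+M)*b" "z - M*b - M*b = z - (M+M)*b"
      by (simp_all add: algebra_simps)
    show ?thesis unfolding M2 unfolding Suc.IH M_def[symmetric] r
      by (simp only: add_ac bit_add_self bit_add_self2 add_0_left add_0_right)
  qed
  finally show ?case .
qed

lemma Aop_zero: "(Aop a b ^^ m) (\<lambda>_. 0) = (\<lambda>_. 0)"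
  by (induction m) (auto simp: Aop_def)



lemma neg_mod_cong: "(z::int) mod n = w mod n \<Longrightarrow> (- z) mod n = (- w) mod n"
  by (metis mod_minus_eq)

lemma circ_sym: "circ_E n (pm_set n a b) x y \<Longrightarrow> circ_E n (pm_set n a b) y x"
proof -
  assume "circ_E n (pm_set n a b) x y"
  hence h: "(y - x) mod n \<in> {a mod n, (- a) mod n, b mod n, (- b) mod n}"
    by (simp add: circ_E_def pm_set_def)
  have e: "x - y = - (y - x)" by simp
  have "(x - y) mod n \<in> {a mod n, (- a) mod n, b mod n, (- b) mod n}"
    using h unfolding e
    by (auto dest: neg_mod_cong simp del: mod_minus_eq)
  thus ?thesis by (simp add: circ_E_def pm_set_def)
qed

lemma mem_shift: assumes "n > 0" "u \<in> {0..<n}"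
  shows "((u - v) mod n = c mod n) \<longleftrightarrow> u = ((v::int) + c) mod n"
proof
  assume h: "(u - v) mod n = c mod n"
  have "u = u mod n" using assms by simp
  also have "\<dots> = (v + (u - v)) mod n" by simp
  also have "\<dots> = (v + c) mod n" using h by (metis mod_add_right_eq)
  finally show "u = (v + c) mod n" .
next
  assume "u = (v + c) mod n"
  thus "(u - v) mod n = c mod n" by (simp add: mod_diff_left_eq)
qed

lemma card4_distinct: "card {p,q,r,s} = 4 \<Longrightarrow> p\<noteq>q \<and> p\<noteq>r \<and> p\<noteq>s \<and> q\<noteq>r \<and> q\<noteq>s \<and> r\<noteq>s"
  by (cases "p = q"; cases "p = r"; cases "p = s"; cases "q = r"; cases "q = s"; cases "r = s";
      auto simp: card_insert_if)

lemma dvd_of_mod_self: "(x::int) \<in> {0..<n} \<Longrightarrow> (x + w) mod n = x \<Longrightarrow> n dvd w"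
proof -
  assume x: "x \<in> {0..<n}" and h: "(x + w) mod n = x"
  hence "(x + w) mod n = x mod n" by simp
  hence "n dvd (x + w) - x" by (simp only: mod_eq_dvd_iff)
  thus ?thesis by simp
qed

lemma dvd_cancel_one: "(N::int) mod l = 1 \<Longrightarrow> l dvd N * c \<Longrightarrow> l dvd c"
proof -
  assume N: "N mod l = 1" and d: "l dvd N * c"
  have "(N * c) mod l = ((N mod l) * c) mod l" by (simp add: mod_mult_left_eq)
  hence "(N * c) mod l = c mod l" using N by simp
  thus ?thesis using d by (simp add: dvd_eq_mod_eq_0)
qed

lemma two_pow_mod: assumes "odd (l::int)" "l \<ge> 2"
  shows "(2::int) ^ (totient (nat l) * t) mod l = 1"
proof -
  have cp: "coprime (2::nat) (nat l)" using assms
    by (metis coprime_commute coprime_int_iff even_of_nat int_nat_eq odd_imp_coprime_nat 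
        not_less nat_0_le order_trans zero_le_numeral)
  have "[2 ^ totient (nat l) = 1] (mod nat l)" by (rule euler_theorem[OF cp])
  hence "[(2 ^ totient (nat l)) ^ t = 1 ^ t] (mod nat l)" by (rule cong_pow)
  hence "[2 ^ (totient (nat l) * t) = 1] (mod nat l)" by (simp add: power_mult)
  hence "[int (2 ^ (totient (nat l) * t)) = int 1] (mod int (nat l))" by (simp only: cong_int_iff)
  hence "[(2::int) ^ (totient (nat l) * t) = 1] (mod l)" using assms by simp
  thus ?thesis using assms by (simp add: cong_def)
qed



lemma sum4: "p\<noteq>q \<and> p\<noteq>r \<and> p\<noteq>s \<and> q\<noteq>r \<and> q\<noteq>s \<and> r\<noteq>s \<Longrightarrow>
  sum (h :: _ \<Rightarrow> 'b::comm_monoid_add) {p,q,r,s} = h p + h q + h r + h s"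
  by (simp add: add.assoc)

theorem theorem9p17:
  fixes l a b :: int
  assumes "l \<ge> 2" and "odd l"
    and "a \<in> {1..l-1}" and "b \<in> {1..l-1}"
    and "gconnected (circ_V (2*l)) (circ_E (2*l) (pm_set (2*l) a b))"
    and "gregular (circ_V (2*l)) (circ_E (2*l) (pm_set (2*l) a b)) 4"
    and "a + b \<noteq> l"
  shows "\<not> vertex_PST (circ_V (2*l)) (circ_E (2*l) (pm_set (2*l) a b))"
proof
  define n where "n = 2 * l"
  define V where "V = circ_V n"
  define E where "E = circ_E n (pm_set n a b)"
  have n0: "n > 0" using assms(1) by (simp add: n_def)
  interpret R: reg4 V E
  proof
    show "finite V" by (simp add: V_def circ_V_def)
    show "E x y \<Longrightarrow> E y x" for x y unfolding E_def by (rule circ_sym)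
    show "x \<in> V \<Longrightarrow> gdeg V E x = 4" for x using assms(6) by (simp add: gregular_def V_def E_def n_def)
  qed
  have Nbv: "R.Nb v = {(v+a) mod n, (v+(-a)) mod n, (v+b) mod n, (v+(-b)) mod n}" if v: "v \<in> V" for v
  proof -
    have "R.Nb v = {u\<in>{0..<n}. (u - v) mod n = a mod n \<or> (u - v) mod n = (-a) mod n
       \<or> (u - v) mod n = b mod n \<or> (u - v) mod n = (-b) mod n}"
      unfolding R.Nb_def by (auto simp: V_def E_def circ_V_def circ_E_def pm_set_def)
    also have "\<dots> = {u\<in>{0..<n}. u = (v+a) mod n \<or> u = (v+(-a)) mod n \<or> u = (v+b) mod n \<or> u = (v+(-b)) mod n}"
      using mem_shift[OF n0] by blast
    also have "\<dots> = {(v+a) mod n, (v+(-a)) mod n, (v+b) mod n, (v+(-b)) mod n}"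
      using n0 by auto
    finally show ?thesis .
  qed
  have dist: "(v+a) mod n \<noteq> (v+(-a)) mod n \<and> (v+a) mod n \<noteq> (v+b) mod n \<and> (v+a) mod n \<noteq> (v+(-b)) mod n
     \<and> (v+(-a)) mod n \<noteq> (v+b) mod n \<and> (v+(-a)) mod n \<noteq> (v+(-b)) mod n \<and> (v+b) mod n \<noteq> (v+(-b)) mod n"
    if v: "v \<in> V" for v
    using R.card_Nb[OF v] unfolding Nbv[OF v] by (rule card4_distinct)
  have A4: "R.Aadj h v = h ((v+a) mod n) + h ((v+(-a)) mod n) + h ((v+b) mod n) + h ((v+(-b)) mod n)"
    if v: "v \<in> V" for v and h :: "int \<Rightarrow> bit"
    unfolding R.Aadj_def Nbv[OF v] by (rule sum4[OF dist[OF v]])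
  have V0: "0 \<in> V" using n0 by (simp add: V_def circ_V_def)
  have ab: "a \<noteq> b" using dist[OF V0] by auto
  assume "vertex_PST (circ_V (2*l)) (circ_E (2*l) (pm_set (2*l) a b))"
  then obtain x y \<tau> \<gamma> where x: "x \<in> V" and y: "y \<in> V" and tau: "\<tau> \<ge> 1" and g: "cmod \<gamma> = 1"
    and h: "\<forall>a\<in>arcs V E. walkU_pow V E \<tau> (vstate V E x) a = \<gamma> * vstate V E y a"
    unfolding vertex_PST_def V_def E_def n_def by blast
  have ev: "R.Bt x \<tau> v = 0" if "v \<in> V" for v
    using R.Bt_even R.PST_even[OF x y h g that] by blast
  define \<delta> :: "int \<Rightarrow> bit" where "\<delta> w = (if w mod n = x then 1 else 0)" for w
  have modV: "z mod n \<in> V" for z using n0 by (simp add: V_def circ_V_def)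
  have D: "R.Bt x (Suc t) (z mod n) = (Aop a b ^^ Suc t) \<delta> z" for t z
  proof (induction t arbitrary: z)
    case 0
    have "R.Bt x (Suc 0) (z mod n) = R.Aadj (\<lambda>u. if u = x then 1 else 0) (z mod n)"
      using R.fin_Nb by (simp add: R.Bt_one R.Aadj_def sum.delta')
    also have "\<dots> = Aop a b \<delta> z"
      unfolding A4[OF modV] Aop_def \<delta>_def
      by (simp only: mod_add_left_eq diff_conv_add_uminus)
    finally show ?case by simp
  next
    case (Suc t)
    have "R.Bt x (Suc (Suc t)) (z mod n) = R.Aadj (R.Bt x (Suc t)) (z mod n)"
      by (rule R.Bt_step[OF modV])
    also have "\<dots> = Aop a b ((Aop a b ^^ Suc t) \<delta>) z"
      unfolding A4[OF modV] Aop_def Suc.IH[symmetric]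
      by (simp only: mod_add_left_eq diff_conv_add_uminus)
    finally show ?case by simp
  qed
  obtain t0 where t0: "\<tau> = Suc t0" using tau by (cases \<tau>) auto
  have Z: "(Aop a b ^^ \<tau>) \<delta> = (\<lambda>_. 0)"
  proof
    fix z
    have "(Aop a b ^^ \<tau>) \<delta> z = R.Bt x \<tau> (z mod n)" unfolding t0 by (rule D[symmetric])
    thus "(Aop a b ^^ \<tau>) \<delta> z = 0" using ev[OF modV] by (simp only:)
  qed
  define k where "k = totient (nat l) * \<tau>"
  have tp: "totient (nat l) \<ge> 1" using assms(1) by (simp add: Suc_le_eq)
  have "\<tau> \<le> k" using tp by (simp add: k_def)
  also have "k < 2^k" by (rule less_exp)
  finally have tk: "\<tau> \<le> 2^k" by simp
  have Z2: "(Aop a b ^^ (2^k)) \<delta> = (\<lambda>_. 0)"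
  proof -
    define m where "m = (2::nat)^k - \<tau>"
    have m: "(2::nat)^k = m + \<tau>" using tk by (simp add: m_def)
    have "(Aop a b ^^ (2^k)) \<delta> = (Aop a b ^^ m) ((Aop a b ^^ \<tau>) \<delta>)"
      unfolding m by (simp only: funpow_add comp_apply)
    thus ?thesis unfolding Z Aop_zero .
  qed
  define N :: int where "N = 2^k"
  have Nl: "N mod l = 1" unfolding N_def k_def by (rule two_pow_mod[OF assms(2,1)])
  have xV: "x \<in> {0..<n}" using x by (simp add: V_def circ_V_def)
  have l0: "l > 0" using assms(1) by simp
  have bad: "\<delta> (x + N * c) = 0" if nd: "\<not> l dvd c" for c
  proof (rule ccontr)
    assume "\<delta> (x + N * c) \<noteq> 0"
    hence "(x + N * c) mod n = x" by (simp add: \<delta>_def split: if_splits)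
    hence "n dvd N * c" by (rule dvd_of_mod_self[OF xV])
    hence "l dvd N * c" unfolding n_def by (rule dvd_mult_right)
    hence "l dvd c" by (rule dvd_cancel_one[OF Nl])
    thus False using nd by simp
  qed
  have a1: "1 \<le> a" "a \<le> l - 1" using assms(3) by auto
  have b1: "1 \<le> b" "b \<le> l - 1" using assms(4) by auto
  have c1: "\<not> l dvd (-2*a)"
  proof
    assume "l dvd (-2*a)"
    hence "l dvd 2 * a" by simp
    moreover have "coprime l 2" using assms(2) by simp
    ultimately have "l dvd a" using coprime_dvd_mult_right_iff by blast
    hence "l \<le> a" by (rule zdvd_imp_le) (use a1 in linarith)
    thus False using a1 by linarith
  qed
  have c2: "\<not> l dvd (b - a)"
  proof
    assume d: "l dvd (b - a)"
    have "b - a \<noteq> 0" using ab by simp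
    hence "\<bar>l\<bar> \<le> \<bar>b - a\<bar>" using dvd_imp_le_int d by blast
    thus False using a1 b1 l0 by linarith
  qed
  have c3: "\<not> l dvd (-(a+b))"
  proof
    assume "l dvd (-(a+b))"
    hence "l dvd (a+b)" by (simp only: dvd_minus_iff)
    then obtain m where m: "a + b = l * m" by (rule dvdE)
    have "0 < l * m" using m a1 b1 by linarith
    hence m1: "m > 0" using l0 by (simp add: zero_less_mult_iff)
    have "l * m < l * 2" using m a1 b1 by linarith
    hence "m < 2" using l0 by simp
    hence "m = 1" using m1 by simp
    thus False using m assms(7) by simp
  qed
  have args: "x - N * a + N * a = x + N * 0" "x - N * a - N * a = x + N * (-2*a)"
    "x - N * a + N * b = x + N * (b - a)" "x - N * a - N * b = x + N * (-(a+b))"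
    by (simp_all add: algebra_simps)
  have d0: "\<delta> (x + N * 0) = 1" using xV by (simp add: \<delta>_def)
  have "(Aop a b ^^ (2^k)) \<delta> (x - N * a) = \<delta> (x + N * 0) + \<delta> (x + N * (-2*a)) + \<delta> (x + N * (b - a)) + \<delta> (x + N * (-(a+b)))"
    unfolding Aop_frob N_def[symmetric] args ..
  also have "\<dots> = 1" unfolding d0 bad[OF c1] bad[OF c2] bad[OF c3] by simp
  finally show False using Z2 by simp
qed

end
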